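(* Under the standing assumptions below, let $\lambda=(\lambda_n)\in c_H$ and suppose the sequence $k(\lambda)=(k_n(\lambda))$ is well defined (all infinite products converge) and belongs to $X^*$, i.e., $x\mapsto\sum_{n=1}^\infty k_n(\lambda)x_n$ is a well-defined bounded linear functional on $X$. Then, with $T_{k(\lambda)}=A+b\,k(\lambda)$, $$\Sigma(T_{k(\lambda)})=\{\lambda_n\mid n\in\mathbb{N}_0\},\qquad\text{where }\lambda_0:=0.$$
   Context: $X$ is one of $\ell^p$ ($1\le p\le\infty$), $c$, $c_0$ (complex sequences; $c,c_0$ with the sup norm). Standing assumptions: $a=(a_n)$ is a strictly decreasing sequence of positive reals with $a_n\to0$; $b=(b_n)\in X$ with $b_n\neq0$ for all $n$. $A:X\to X$ is $(x_n)\mapsto(a_nx_n)$, and for a functional $k$, $T_k:=A+bk$, $x\mapsto Ax+(kx)b$. $H:=\{z\in\mathbb{C}\mid\operatorname{re} z\le 0\}$ and $c_H:=\{(\lambda_n)\in c_0\mid \lambda_n\in H\ \forall n\}$. For $\lambda\in c_H$, $$k_n(\lambda):=-\frac{a_n-\lambda_n}{b_n}\prod_{m\ge1,\,m\neq n}\frac{1-\lambda_m/a_n}{1-a_m/a_n},\quad n\in\mathbb{N}.$$ $\mathbb{N}_0=\{0,1,2,\dots\}$. *)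

theory Defs
  imports "HOL-Analysis.Analysis"
begin

text \<open>The sequence space X: Lp p (1 \<le> p < \<infinity>), Linf (= l^\<infinity>), Conv (= c), Conv0 (= c_0).
  Sequences are indexed by nat starting at 0 (index n corresponds to the paper's n+1).\<close>
datatype seqspace = Lp real | Linf | Conv | Conv0

definition valid_space :: "seqspace \<Rightarrow> bool" where
  "valid_space X = (case X of Lp p \<Rightarrow> 1 \<le> p | _ \<Rightarrow> True)"

definition inX :: "seqspace \<Rightarrow> (nat \<Rightarrow> complex) \<Rightarrow> bool" where
  "inX X x = (case X of
      Lp p \<Rightarrow> summable (\<lambda>n. norm (x n) powr p)
    | Linf \<Rightarrow> bounded (range x)
    | Conv \<Rightarrow> convergent x
    | Conv0 \<Rightarrow> x \<longlonglongrightarrow> 0)"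

definition normX :: "seqspace \<Rightarrow> (nat \<Rightarrow> complex) \<Rightarrow> real" where
  "normX X x = (case X of
      Lp p \<Rightarrow> (\<Sum>n. norm (x n) powr p) powr (1 / p)
    | _ \<Rightarrow> (SUP n. norm (x n)))"

definition bounded_opX :: "seqspace \<Rightarrow> ((nat \<Rightarrow> complex) \<Rightarrow> (nat \<Rightarrow> complex)) \<Rightarrow> bool" where
  "bounded_opX X T =
     ((\<forall>x. inX X x \<longrightarrow> inX X (T x)) \<and>
      (\<forall>x y. inX X x \<longrightarrow> inX X y \<longrightarrow> T (\<lambda>n. x n + y n) = (\<lambda>n. T x n + T y n)) \<and>
      (\<forall>c x. inX X x \<longrightarrow> T (\<lambda>n. c * x n) = (\<lambda>n. c * T x n)) \<and>
      (\<exists>K. \<forall>x. inX X x \<longrightarrow> normX X (T x) \<le> K * normX X x))"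

definition spectrumX :: "seqspace \<Rightarrow> ((nat \<Rightarrow> complex) \<Rightarrow> (nat \<Rightarrow> complex)) \<Rightarrow> complex set" where
  "spectrumX X T = {\<mu>. \<not> (\<exists>S. bounded_opX X S \<and>
      (\<forall>x. inX X x \<longrightarrow> S (\<lambda>n. T x n - \<mu> * x n) = x \<and> (\<lambda>n. T (S x) n - \<mu> * S x n) = x))}"

definition in_dualX :: "seqspace \<Rightarrow> (nat \<Rightarrow> complex) \<Rightarrow> bool" where
  "in_dualX X k = ((\<forall>x. inX X x \<longrightarrow> summable (\<lambda>n. k n * x n)) \<and>
      (\<exists>K. \<forall>x. inX X x \<longrightarrow> norm (\<Sum>n. k n * x n) \<le> K * normX X x))"

definition Top :: "(nat \<Rightarrow> real) \<Rightarrow> (nat \<Rightarrow> complex) \<Rightarrow> (nat \<Rightarrow> complex)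
                   \<Rightarrow> (nat \<Rightarrow> complex) \<Rightarrow> (nat \<Rightarrow> complex)" where
  "Top a b k x = (\<lambda>n. complex_of_real (a n) * x n + (\<Sum>m. k m * x m) * b n)"

definition kfac :: "(nat \<Rightarrow> real) \<Rightarrow> (nat \<Rightarrow> complex) \<Rightarrow> nat \<Rightarrow> nat \<Rightarrow> complex" where
  "kfac a lam n m = (if m = n then 1 else
      (1 - lam m / complex_of_real (a n)) / (1 - complex_of_real (a m / a n)))"

definition kseq :: "(nat \<Rightarrow> real) \<Rightarrow> (nat \<Rightarrow> complex) \<Rightarrow> (nat \<Rightarrow> complex) \<Rightarrow> nat \<Rightarrow> complex" where
  "kseq a b lam n = - ((complex_of_real (a n) - lam n) / b n) * (\<Prod>m. kfac a lam n m)"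

end

theory Submission
  imports Defs
begin

lemma powr3_bound:
  fixes s t r u p :: real
  assumes "0 \<le> s" "0 \<le> t" "0 \<le> r" "0 \<le> u" "u \<le> s + t + r" "0 < p"
  shows "u powr p \<le> 3 powr p * (s powr p + t powr p + r powr p)"
proof -
  define M where "M = max s (max t r)"
  have M0: "0 \<le> M" using assms by (simp add: M_def)
  have "u \<le> 3 * M" using assms unfolding M_def by linarith
  hence "u powr p \<le> (3*M) powr p" by (intro powr_mono2) (use assms in auto)
  also have "\<dots> = 3 powr p * M powr p" using M0 by (simp add: powr_mult)
  also have "M powr p \<le> s powr p + t powr p + r powr p"
    unfolding M_def by (auto simp: max_def)
  hence "3 powr p * M powr p \<le> 3 powr p * (s powr p + t powr p + r powr p)"
    by (intro mult_left_mono) auto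
  finally show ?thesis .
qed

lemma valid_Lp: "valid_space (Lp p) \<Longrightarrow> 1 \<le> p"
  by (simp add: valid_space_def)

lemma inX_bounded:
  assumes "inX X x" "case X of Lp _ \<Rightarrow> False | _ \<Rightarrow> True"
  shows "bdd_above (range (\<lambda>n. norm (x n)))"
proof -
  have "bounded (range x)"
  proof (cases X)
    case (Lp q) then show ?thesis using assms by simp
  next
    case Linf then show ?thesis using assms by (simp add: inX_def)
  next
    case Conv then have "convergent x" using assms by (simp add: inX_def)
    then show ?thesis by (metis Bseq_eq_bounded convergent_imp_Bseq)
  next
    case Conv0 then have "convergent x" using assms by (auto simp: inX_def convergent_def)
    then show ?thesis by (metis Bseq_eq_bounded convergent_imp_Bseq)
  qed
  then obtain B where "\<And>n. norm (x n) \<le> B" by (auto simp: bounded_iff)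
  then show ?thesis by (auto intro!: bdd_aboveI[where M=B])
qed

lemma inX_fin:
  assumes "\<And>n. n \<ge> N \<Longrightarrow> x n = 0" "valid_space X"
  shows "inX X x"
proof (cases X)
  case (Lp p)
  then have p: "p > 0" using assms valid_Lp by force
  have "summable (\<lambda>n. norm (x n) powr p)"
    by (rule summable_finite[of "{..<N}"]) (use assms p in auto)
  then show ?thesis using Lp by (simp add: inX_def)
next
  case Linf
  have "range x \<subseteq> insert 0 (x ` {..<N})"
  proof
    fix z assume "z \<in> range x"
    then obtain n where "z = x n" by auto
    then show "z \<in> insert 0 (x ` {..<N})" using assms(1)[of n] by (cases "n < N") auto
  qed
  hence "finite (range x)" by (meson finite_imageI finite_insert finite_lessThan finite_subset)
  then show ?thesis using Linf by (simp add: inX_def finite_imp_bounded)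
next
  case Conv
  have "x \<longlonglongrightarrow> 0" using assms by (intro tendsto_eventually) (auto simp: eventually_sequentially)
  then show ?thesis using Conv by (auto simp: inX_def convergent_def)
next
  case Conv0
  have "x \<longlonglongrightarrow> 0" using assms by (intro tendsto_eventually) (auto simp: eventually_sequentially)
  then show ?thesis using Conv0 by (auto simp: inX_def)
qed

lemma inX_add:
  assumes "inX X x" "inX X y" "valid_space X"
  shows "inX X (\<lambda>n. x n + y n)"
proof (cases X)
  case (Lp p)
  then have p: "p > 0" using assms valid_Lp by force
  have s: "summable (\<lambda>n. 3 powr p * (norm (x n) powr p + norm (y n) powr p + 0 powr p))"
    using assms Lp p by (auto simp: inX_def intro!: summable_mult summable_add)
  have "summable (\<lambda>n. norm (x n + y n) powr p)"
    apply (rule summable_comparison_test[OF _ s])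
    apply (intro exI[of _ 0] allI impI)
    apply simp
    using powr3_bound[of "norm (x _)" "norm (y _)" 0 "norm (x _ + y _)" p] p
    by (simp add: norm_triangle_ineq)
  then show ?thesis using Lp by (simp add: inX_def)
next
  case Linf
  then obtain B C where "\<And>n. norm (x n) \<le> B" "\<And>n. norm (y n) \<le> C" using assms
    by (auto simp: inX_def bounded_iff)
  hence "\<And>n. norm (x n + y n) \<le> B + C" by (meson add_mono norm_triangle_ineq order_trans)
  then show ?thesis using Linf by (auto simp: inX_def bounded_iff)
next
  case Conv then show ?thesis using assms by (auto simp: inX_def intro: convergent_add)
next
  case Conv0 then show ?thesis using assms by (auto simp: inX_def intro: tendsto_add_zero)
qed

lemma inX_mult:
  assumes "inX X x" "convergent d" "valid_space X"
  shows "inX X (\<lambda>n. d n * x n)"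
proof -
  obtain B where B: "\<And>n. norm (d n) \<le> B" using assms(2)
    by (metis Bseq_def convergent_imp_Bseq less_eq_real_def)
  have B0: "0 \<le> B" using B[of 0] norm_ge_zero order_trans by blast
  show ?thesis
  proof (cases X)
    case (Lp p)
    then have p: "p > 0" using assms valid_Lp by force
    have s: "summable (\<lambda>n. B powr p * norm (x n) powr p)"
      using assms Lp by (auto simp: inX_def intro!: summable_mult)
    have "summable (\<lambda>n. norm (d n * x n) powr p)"
      apply (rule summable_comparison_test[OF _ s])
      apply (intro exI[of _ 0] allI impI)
      apply (simp add: norm_mult)
      using p B B0 by (metis mult_right_mono norm_ge_zero powr_mono2 powr_mult zero_le_mult_iff less_imp_le)
    then show ?thesis using Lp by (simp add: inX_def)
  next
    case Linf
    then obtain C where "\<And>n. norm (x n) \<le> C" using assms by (auto simp: inX_def bounded_iff)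
    hence "\<And>n. norm (d n * x n) \<le> B * C" using B B0
      by (simp add: norm_mult mult_mono)
    then show ?thesis using Linf by (auto simp: inX_def bounded_iff)
  next
    case Conv then show ?thesis using assms by (auto simp: inX_def intro: convergent_mult)
  next
    case Conv0
    obtain L where "d \<longlonglongrightarrow> L" using assms(2) by (auto simp: convergent_def)
    moreover have "x \<longlonglongrightarrow> 0" using assms Conv0 by (simp add: inX_def)
    ultimately have "(\<lambda>n. d n * x n) \<longlonglongrightarrow> L * 0" by (intro tendsto_mult)
    then show ?thesis using Conv0 by (simp add: inX_def)
  qed
qed

lemma inX_scale:
  assumes "inX X x" "valid_space X"
  shows "inX X (\<lambda>n. c * x n)"
  using inX_mult[OF assms(1) _ assms(2), of "\<lambda>_. c"] by (simp add: convergent_const)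

lemma coord_le:
  assumes "inX X x" "valid_space X"
  shows "norm (x m) \<le> normX X x"
proof (cases X)
  case (Lp p)
  then have p: "p > 0" using assms valid_Lp by force
  have s: "summable (\<lambda>n. norm (x n) powr p)" using assms Lp by (simp add: inX_def)
  have "norm (x m) powr p \<le> (\<Sum>n. norm (x n) powr p)"
    using sum_le_suminf[OF s, of "{m}"] by simp
  hence "(norm (x m) powr p) powr (1/p) \<le> (\<Sum>n. norm (x n) powr p) powr (1/p)"
    by (intro powr_mono2) (use p in auto)
  then show ?thesis using Lp p by (simp add: powr_powr normX_def)
next
  case Linf
  then show ?thesis using inX_bounded[OF assms(1)]
    by (auto simp: normX_def intro!: cSUP_upper)
next
  case Conv
  then show ?thesis using inX_bounded[OF assms(1)]
    by (auto simp: normX_def intro!: cSUP_upper)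
next
  case Conv0
  then show ?thesis using inX_bounded[OF assms(1)]
    by (auto simp: normX_def intro!: cSUP_upper)
qed

lemma normX_nonneg: "inX X x \<Longrightarrow> valid_space X \<Longrightarrow> 0 \<le> normX X x"
  using coord_le[of X x 0] norm_ge_zero order_trans by blast

definition ee :: "nat \<Rightarrow> nat \<Rightarrow> complex" where "ee j = (\<lambda>n. if n = j then 1 else 0)"

lemma inX_ee: "valid_space X \<Longrightarrow> inX X (ee j)"
  by (rule inX_fin[of "Suc j"]) (auto simp: ee_def)

lemma normX_ee: assumes "valid_space X" shows "normX X (ee j) \<le> 1"
proof (cases X)
  case (Lp p)
  then have p: "p > 0" using assms valid_Lp by force
  have "(\<Sum>n. norm (ee j n) powr p) = (\<Sum>n\<in>{j}. norm (ee j n) powr p)"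
    by (rule suminf_finite) (auto simp: ee_def)
  then show ?thesis using Lp p by (simp add: normX_def ee_def)
qed (auto simp: normX_def ee_def intro!: cSUP_least)


lemma normX_cmp:
  assumes X: "valid_space X" and iy: "inX X y" and iw: "inX X w" and iv: "inX X v" and iz: "inX X z"
    and C: "0 \<le> C" and M: "0 \<le> M" and N: "0 \<le> N"
    and le: "\<And>n. norm (z n) \<le> C * norm (y n) + M * norm (w n) + N * norm (v n)"
  shows "normX X z \<le> 9 * (C * normX X y + M * normX X w + N * normX X v)"
proof (cases "\<exists>p. X = Lp p")
  case True
  then obtain p where Lp: "X = Lp p" by auto
  then have p: "p > 0" "1 \<le> p" using X valid_Lp by force+
  define Y where "Y = (\<Sum>n. norm (y n) powr p)"
  define W where "W = (\<Sum>n. norm (w n) powr p)"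
  define V where "V = (\<Sum>n. norm (v n) powr p)"
  have sy: "summable (\<lambda>n. norm (y n) powr p)" using iy Lp by (simp add: inX_def)
  have sw: "summable (\<lambda>n. norm (w n) powr p)" using iw Lp by (simp add: inX_def)
  have sv: "summable (\<lambda>n. norm (v n) powr p)" using iv Lp by (simp add: inX_def)
  have sz: "summable (\<lambda>n. norm (z n) powr p)" using iz Lp by (simp add: inX_def)
  have Y0: "0 \<le> Y" "0 \<le> W" "0 \<le> V" unfolding Y_def W_def V_def
    by (auto intro!: suminf_nonneg sy sw sv)
  have nY: "normX X y = Y powr (1/p)" "normX X w = W powr (1/p)" "normX X v = V powr (1/p)"
    "normX X z = (\<Sum>n. norm (z n) powr p) powr (1/p)"
    using Lp by (simp_all add: normX_def Y_def W_def V_def)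
  have pw: "(Q powr (1/p)) powr p = Q" if "0 \<le> Q" for Q
    using p that by (simp add: powr_powr)
  define S where "S = C * normX X y + M * normX X w + N * normX X v"
  have S0: "0 \<le> S" unfolding S_def using C M N iy iw iv X normX_nonneg by auto
  have trm: "norm (z n) powr p \<le> 3 powr p * ((C powr p) * norm (y n) powr p
      + (M powr p) * norm (w n) powr p + (N powr p) * norm (v n) powr p)" for n
    using powr3_bound[OF _ _ _ _ le[of n] p(1)] C M N by (simp add: powr_mult)
  have "(\<Sum>n. norm (z n) powr p) \<le> (\<Sum>n. 3 powr p * ((C powr p) * norm (y n) powr p
      + (M powr p) * norm (w n) powr p + (N powr p) * norm (v n) powr p))"
    by (rule suminf_le[OF trm sz]) (intro summable_mult summable_add sy sw sv)
  also have "\<dots> = 3 powr p * ((C powr p) * Y + (M powr p) * W + (N powr p) * V)"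
    using sums_mult[OF sums_add[OF sums_add[OF sums_mult[OF summable_sums[OF sy], of "C powr p"]
       sums_mult[OF summable_sums[OF sw], of "M powr p"]] sums_mult[OF summable_sums[OF sv], of "N powr p"]], of "3 powr p"]
    unfolding Y_def W_def V_def by (simp add: sums_iff)
  also have "(C powr p) * Y = (C * normX X y) powr p" using nY pw Y0 C by (simp add: powr_mult)
  also have "(M powr p) * W = (M * normX X w) powr p" using nY pw Y0 M by (simp add: powr_mult)
  also have "(N powr p) * V = (N * normX X v) powr p" using nY pw Y0 N by (simp add: powr_mult)
  also have "(C * normX X y) powr p + (M * normX X w) powr p + (N * normX X v) powr p
      \<le> S powr p + S powr p + S powr p"
    unfolding S_def using C M N iy iw iv X normX_nonneg p
    by (intro add_mono powr_mono2) (auto intro: mult_nonneg_nonneg)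
  finally have sz_le: "(\<Sum>n. norm (z n) powr p) \<le> 3 powr p * (3 * S powr p)"
    by (simp add: mult_left_mono)
  have "normX X z \<le> (3 powr p * (3 * S powr p)) powr (1/p)"
    unfolding nY(4) using p sz sz_le by (intro powr_mono2) (auto intro!: suminf_nonneg)
  also have "\<dots> = 3 * 3 powr (1/p) * S"
    using p S0 by (simp add: powr_mult powr_powr)
  also have "3 powr (1/p) \<le> 3 powr 1"
    using p by (intro powr_mono) auto
  hence "3 * 3 powr (1/p) * S \<le> 9 * S" using S0 by (simp add: mult_right_mono)
  finally show ?thesis unfolding S_def .
next
  case False
  define S where "S = C * normX X y + M * normX X w + N * normX X v"
  have S0: "0 \<le> S" unfolding S_def using C M N iy iw iv X normX_nonneg by auto
  have nz: "normX X z = (SUP n. norm (z n))" using False by (cases X) (auto simp: normX_def)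
  have "norm (z n) \<le> S" for n
  proof -
    have "C * norm (y n) \<le> C * normX X y" using coord_le[OF iy X, of n] C by (rule mult_left_mono)
    moreover have "M * norm (w n) \<le> M * normX X w" using coord_le[OF iw X, of n] M by (rule mult_left_mono)
    moreover have "N * norm (v n) \<le> N * normX X v" using coord_le[OF iv X, of n] N by (rule mult_left_mono)
    ultimately show ?thesis unfolding S_def using le[of n] by linarith
  qed
  hence "normX X z \<le> S" unfolding nz by (intro cSUP_least) auto
  then show ?thesis using S0 unfolding S_def[symmetric] by linarith
qed

definition RR :: "(nat \<Rightarrow> complex) \<Rightarrow> (nat \<Rightarrow> complex) \<Rightarrow> nat set \<Rightarrow> complex \<Rightarrow> complex" where
  "RR \<alpha> \<beta> S \<mu> = (\<Prod>m\<in>S. (\<mu> - \<beta> m) / (\<mu> - \<alpha> m))"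

definition CC :: "(nat \<Rightarrow> complex) \<Rightarrow> (nat \<Rightarrow> complex) \<Rightarrow> nat set \<Rightarrow> nat \<Rightarrow> complex" where
  "CC \<alpha> \<beta> S n = (\<alpha> n - \<beta> n) * (\<Prod>m\<in>S-{n}. (\<alpha> n - \<beta> m) / (\<alpha> n - \<alpha> m))"

lemma pf_term:
  fixes \<mu> an aj bj :: complex
  assumes "\<mu> \<noteq> an" "\<mu> \<noteq> aj" "an \<noteq> aj"
  shows "(\<mu> - bj) / ((\<mu> - an) * (\<mu> - aj)) =
    ((an - bj) / (an - aj)) / (\<mu> - an) + ((aj - bj) / (aj - an)) / (\<mu> - aj)"
proof -
  have h: "\<mu> - an \<noteq> 0" "\<mu> - aj \<noteq> 0" "an - aj \<noteq> 0" "aj - an \<noteq> 0" using assms by auto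
  have "((an - bj) / (an - aj)) / (\<mu> - an) + ((aj - bj) / (aj - an)) / (\<mu> - aj)
     = ((an - bj) * (\<mu> - aj) - (aj - bj) * (\<mu> - an)) / ((an - aj) * ((\<mu> - an) * (\<mu> - aj)))"
    using h by (simp add: divide_simps) (simp add: algebra_simps)
  also have "(an - bj) * (\<mu> - aj) - (aj - bj) * (\<mu> - an) = (an - aj) * (\<mu> - bj)" by (simp add: algebra_simps)
  finally show ?thesis using h by simp
qed

lemma partial_fractions:
  assumes "finite S"
  shows "inj_on \<alpha> S \<Longrightarrow> (\<forall>m\<in>S. \<mu> \<noteq> \<alpha> m) \<Longrightarrow>
    RR \<alpha> \<beta> S \<mu> = 1 + (\<Sum>n\<in>S. CC \<alpha> \<beta> S n / (\<mu> - \<alpha> n))"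
  using assms
proof (induction S arbitrary: \<mu> rule: finite_induct)
  case empty
  then show ?case by (simp add: RR_def)
next
  case (insert j S)
  have inj: "inj_on \<alpha> S" and ajS: "\<forall>m\<in>S. \<alpha> j \<noteq> \<alpha> m" using insert by (auto simp: inj_on_def)
  have mu: "\<forall>m\<in>S. \<mu> \<noteq> \<alpha> m" "\<mu> \<noteq> \<alpha> j" using insert by auto
  have IH1: "RR \<alpha> \<beta> S \<mu> = 1 + (\<Sum>n\<in>S. CC \<alpha> \<beta> S n / (\<mu> - \<alpha> n))" using insert inj mu by blast
  have IH2: "RR \<alpha> \<beta> S (\<alpha> j) = 1 + (\<Sum>n\<in>S. CC \<alpha> \<beta> S n / (\<alpha> j - \<alpha> n))" using insert inj ajS by blast
  have R: "RR \<alpha> \<beta> (insert j S) \<mu> = (\<mu> - \<beta> j) / (\<mu> - \<alpha> j) * RR \<alpha> \<beta> S \<mu>"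
    using insert by (simp add: RR_def)
  have Cn: "CC \<alpha> \<beta> (insert j S) n = CC \<alpha> \<beta> S n * ((\<alpha> n - \<beta> j) / (\<alpha> n - \<alpha> j))" if "n \<in> S" for n
  proof -
    have "insert j S - {n} = insert j (S - {n})" using that insert by auto
    then show ?thesis using insert that by (simp add: CC_def mult.assoc)
  qed
  have Cj: "CC \<alpha> \<beta> (insert j S) j = (\<alpha> j - \<beta> j) * RR \<alpha> \<beta> S (\<alpha> j)"
    using insert by (simp add: CC_def RR_def)
  have "RR \<alpha> \<beta> (insert j S) \<mu> = (\<mu> - \<beta> j) / (\<mu> - \<alpha> j) +
      (\<Sum>n\<in>S. CC \<alpha> \<beta> S n * ((\<mu> - \<beta> j) / ((\<mu> - \<alpha> n) * (\<mu> - \<alpha> j))))"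
    unfolding R IH1 by (simp add: algebra_simps sum_distrib_left sum_divide_distrib)
  also have "\<dots> = (\<mu> - \<beta> j) / (\<mu> - \<alpha> j) +
      (\<Sum>n\<in>S. CC \<alpha> \<beta> S n * (((\<alpha> n - \<beta> j) / (\<alpha> n - \<alpha> j)) / (\<mu> - \<alpha> n))
             + CC \<alpha> \<beta> S n * (((\<alpha> j - \<beta> j) / (\<alpha> j - \<alpha> n)) / (\<mu> - \<alpha> j)))"
    using mu ajS by (intro arg_cong2[where f="(+)"] sum.cong refl, subst pf_term) (auto simp: distrib_left)
  also have "\<dots> = 1 + (\<Sum>n\<in>S. CC \<alpha> \<beta> (insert j S) n / (\<mu> - \<alpha> n))
       + ((\<alpha> j - \<beta> j) + (\<alpha> j - \<beta> j) * (\<Sum>n\<in>S. CC \<alpha> \<beta> S n / (\<alpha> j - \<alpha> n))) / (\<mu> - \<alpha> j)"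
  proof -
    have A: "(\<Sum>n\<in>S. CC \<alpha> \<beta> S n * (((\<alpha> n - \<beta> j) / (\<alpha> n - \<alpha> j)) / (\<mu> - \<alpha> n)))
        = (\<Sum>n\<in>S. CC \<alpha> \<beta> (insert j S) n / (\<mu> - \<alpha> n))"
      by (intro sum.cong refl) (simp add: Cn)
    have B: "(\<Sum>n\<in>S. CC \<alpha> \<beta> S n * (((\<alpha> j - \<beta> j) / (\<alpha> j - \<alpha> n)) / (\<mu> - \<alpha> j)))
        = ((\<alpha> j - \<beta> j) * (\<Sum>n\<in>S. CC \<alpha> \<beta> S n / (\<alpha> j - \<alpha> n))) / (\<mu> - \<alpha> j)"
      by (simp add: sum_distrib_left sum_divide_distrib mult.commute)
    have C: "(\<mu> - \<beta> j) / (\<mu> - \<alpha> j) = 1 + (\<alpha> j - \<beta> j) / (\<mu> - \<alpha> j)"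
      using mu by (simp add: field_simps)
    show ?thesis unfolding sum.distrib A B C by (simp add: add_divide_distrib)
  qed
  also have "\<dots> = 1 + (\<Sum>n\<in>insert j S. CC \<alpha> \<beta> (insert j S) n / (\<mu> - \<alpha> n))"
    using insert by (simp add: Cj IH2 algebra_simps)
  finally show ?case .
qed

locale setting =
  fixes X :: seqspace and a :: "nat \<Rightarrow> real" and b lam :: "nat \<Rightarrow> complex"
  assumes X: "valid_space X"
    and apos: "\<And>n. a n > 0" and adec: "\<And>m n. m < n \<Longrightarrow> a n < a m" and a0: "a \<longlonglongrightarrow> 0"
    and bX: "inX X b" and bnz: "\<And>n. b n \<noteq> 0"
    and lam0: "lam \<longlonglongrightarrow> 0" and relam: "\<And>n. Re (lam n) \<le> 0"
    and cp: "\<And>n. convergent_prod (kfac a lam n)"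
    and dual: "in_dualX X (kseq a b lam)"
begin

abbreviation "\<alpha> \<equiv> (\<lambda>n. complex_of_real (a n))"
definition "k = kseq a b lam"
definition "P n = prodinf (kfac a lam n)"
definition "c n = (\<alpha> n - lam n) * P n"
definition "G \<mu> = 1 + (\<Sum>n. c n / (\<mu> - \<alpha> n))"

lemma alpha0: "\<alpha> \<longlonglongrightarrow> 0"
  using tendsto_of_real[OF a0, where 'a=complex] by simp

lemma a_inj: "a m = a n \<Longrightarrow> m = n"
  using adec by (metis less_irrefl nat_neq_iff)

lemma alpha_inj: "\<alpha> m = \<alpha> n \<Longrightarrow> m = n"
  using a_inj by simp

lemma lam_ne_a: "lam m \<noteq> \<alpha> n"
  using relam[of m] apos[of n] by auto

lemma norm_diff_ge: "a m \<le> norm (\<alpha> m - lam m)" "norm (lam m) \<le> norm (\<alpha> m - lam m)"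
proof -
  have r: "Re (\<alpha> m - lam m) = a m - Re (lam m)" "Im (\<alpha> m - lam m) = - Im (lam m)" by simp_all
  show "a m \<le> norm (\<alpha> m - lam m)"
    using complex_Re_le_cmod[of "\<alpha> m - lam m"] r relam[of m] by linarith
  have "(- Re (lam m)) * (- Re (lam m)) \<le> (a m - Re (lam m)) * (a m - Re (lam m))"
    using relam[of m] apos[of m] by (intro mult_mono) auto
  hence "norm (lam m)^2 \<le> norm (\<alpha> m - lam m)^2"
    unfolding cmod_power2 using r by (simp add: power2_eq_square)
  then show "norm (lam m) \<le> norm (\<alpha> m - lam m)"
    by (meson norm_ge_zero power2_le_imp_le)
qed

lemma kfac_eq: "m \<noteq> n \<Longrightarrow> kfac a lam n m = (\<alpha> n - lam m) / (\<alpha> n - \<alpha> m)"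
proof -
  assume mn: "m \<noteq> n"
  have an: "\<alpha> n \<noteq> 0" using apos[of n] by simp
  have h1: "1 - lam m / \<alpha> n = (\<alpha> n - lam m) / \<alpha> n" using an by (simp add: field_simps)
  have h2: "1 - \<alpha> m / \<alpha> n = (\<alpha> n - \<alpha> m) / \<alpha> n" using an by (simp add: field_simps)
  show ?thesis unfolding kfac_def of_real_divide using mn an by (simp add: h1 h2)
qed

lemma kfac_nz: "kfac a lam n m \<noteq> 0"
proof (cases "m = n")
  case False
  then have "\<alpha> n - \<alpha> m \<noteq> 0" using alpha_inj by force
  moreover have "\<alpha> n - lam m \<noteq> 0" using lam_ne_a by (metis eq_iff_diff_eq_0)
  ultimately show ?thesis using False kfac_eq by simp
qed (simp add: kfac_def)

lemma P_nz: "P n \<noteq> 0"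
  unfolding P_def by (rule prodinf_nonzero[OF cp kfac_nz])

lemma c_eq: "c n = - k n * b n"
  using bnz[of n] by (simp add: c_def k_def kseq_def P_def)

lemma k_nz: "k n \<noteq> 0"
proof -
  have "c n \<noteq> 0" using P_nz lam_ne_a unfolding c_def by (metis eq_iff_diff_eq_0 mult_eq_0_iff)
  then show ?thesis using c_eq by auto
qed

lemma kfac_ge1: assumes "n < m" shows "1 \<le> norm (kfac a lam n m)"
proof -
  have d: "a n - a m > 0" using adec[OF assms] by simp
  have "kfac a lam n m = 1 + (\<alpha> m - lam m) / (\<alpha> n - \<alpha> m)"
    using assms kfac_eq[of m n] d by (simp add: field_simps)
  moreover have "Re ((\<alpha> m - lam m) / (\<alpha> n - \<alpha> m)) = (a m - Re (lam m)) / (a n - a m)"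
    by (metis Re_divide_of_real minus_complex.simps(1) of_real_diff Re_complex_of_real)
  moreover have "(a m - Re (lam m)) / (a n - a m) \<ge> 0"
    using d apos[of m] relam[of m] by simp
  ultimately have "Re (kfac a lam n m) \<ge> 1" by simp
  then show ?thesis using complex_Re_le_cmod order_trans by blast
qed

lemma dual_summable: "inX X x \<Longrightarrow> summable (\<lambda>n. k n * x n)"
  using dual by (simp add: in_dualX_def k_def)

lemma dual_bound: obtains K where "K \<ge> 0" "\<And>x. inX X x \<Longrightarrow> norm (\<Sum>n. k n * x n) \<le> K * normX X x"
proof -
  obtain K where K: "\<And>x. inX X x \<Longrightarrow> norm (\<Sum>n. k n * x n) \<le> K * normX X x"
    using dual by (auto simp: in_dualX_def k_def)
  have "norm (\<Sum>n. k n * x n) \<le> max K 0 * normX X x" if "inX X x" for x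
  proof -
    have "K * normX X x \<le> max K 0 * normX X x"
      using normX_nonneg[OF that X] by (intro mult_right_mono) auto
    then show ?thesis using K[OF that] by linarith
  qed
  then show ?thesis using that[of "max K 0"] by auto
qed

lemma summable_kb: "summable (\<lambda>n. norm (k n * b n))"
proof -
  obtain K where K0: "K \<ge> 0" and K: "\<And>x. inX X x \<Longrightarrow> norm (\<Sum>n. k n * x n) \<le> K * normX X x"
    using dual_bound by blast
  have "(\<Sum>n<N. norm (k n * b n)) \<le> K * (9 * normX X b)" for N
  proof -
    define x where "x n = (if n < N then of_real (norm (b n)) * cnj (k n) / of_real (norm (k n)) else 0)" for n
    have xi: "inX X x" by (rule inX_fin[of N]) (auto simp: x_def X)
    have kx: "k n * x n = (if n < N then of_real (norm (k n * b n)) else 0)" for n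
    proof (cases "n < N")
      case True
      have "k n * x n = of_real (norm (b n)) * (k n * cnj (k n)) / of_real (norm (k n))"
        using True by (simp add: x_def)
      also have "\<dots> = of_real (norm (b n)) * of_real (norm (k n))"
        using k_nz[of n] by (simp add: complex_norm_square[symmetric] power2_eq_square)
      finally show ?thesis using True by (simp add: norm_mult mult.commute)
    qed (simp add: x_def)
    have "(\<Sum>n. k n * x n) = (\<Sum>n<N. of_real (norm (k n * b n)))"
      by (subst suminf_finite[of "{..<N}"]) (auto simp: kx)
    also have "\<dots> = of_real (\<Sum>n<N. norm (k n * b n))" by simp
    finally have "(\<Sum>n<N. norm (k n * b n)) = norm (\<Sum>n. k n * x n)"
      by (simp only: norm_of_real abs_of_nonneg sum_nonneg norm_ge_zero)
    also have "\<dots> \<le> K * normX X x" by (rule K[OF xi])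
    also have "normX X x \<le> 9 * (1 * normX X b + 0 * normX X b + 0 * normX X b)"
      by (rule normX_cmp[OF X bX bX bX xi]) (auto simp: x_def k_nz norm_mult norm_divide)
    hence "K * normX X x \<le> K * (9 * normX X b)" using K0 by (simp add: mult_left_mono)
    finally show ?thesis .
  qed
  then show ?thesis by (intro summableI_nonneg_bounded) auto
qed

lemma summable_c: "summable (\<lambda>n. norm (c n))"
  using summable_kb by (simp add: c_eq norm_mult)

lemma prod_kfac: "(\<Prod>m<N. kfac a lam n m) = (\<Prod>m\<in>{..<N}-{n}. (\<alpha> n - lam m) / (\<alpha> n - \<alpha> m))"
proof -
  have "(\<Prod>m<N. kfac a lam n m) = (\<Prod>m\<in>{..<N}-{n}. kfac a lam n m)"
    by (rule prod.mono_neutral_right) (auto simp: kfac_def)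
  also have "\<dots> = (\<Prod>m\<in>{..<N}-{n}. (\<alpha> n - lam m) / (\<alpha> n - \<alpha> m))"
    by (rule prod.cong) (auto simp: kfac_eq)
  finally show ?thesis .
qed

lemma CC_eq: "CC \<alpha> lam {..<N} n = (\<alpha> n - lam n) * (\<Prod>m<N. kfac a lam n m)"
  by (simp add: CC_def prod_kfac)

lemma kfac_lim: "(\<lambda>N. \<Prod>m<N. kfac a lam n m) \<longlonglongrightarrow> P n"
  using convergent_prod_LIMSEQ[OF cp[of n]] LIMSEQ_lessThan_iff_atMost[of "\<lambda>S. \<Prod>m\<in>S. kfac a lam n m"]
  by (simp add: P_def)

lemma CC_lim: "(\<lambda>N. CC \<alpha> lam {..<N} n) \<longlonglongrightarrow> c n"
  unfolding CC_eq c_def by (intro tendsto_mult tendsto_const kfac_lim)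

lemma CC_bound: assumes "n < N" shows "norm (CC \<alpha> lam {..<N} n) \<le> norm (c n)"
proof -
  have mono: "norm (\<Prod>m<N. kfac a lam n m) \<le> norm (\<Prod>m<M. kfac a lam n m)" if "N \<le> M" for M
    using that
  proof (induction M rule: dec_induct)
    case (step M)
    have "norm (\<Prod>m<Suc M. kfac a lam n m) = norm (\<Prod>m<M. kfac a lam n m) * norm (kfac a lam n M)"
      by (simp add: norm_mult)
    also have "\<dots> \<ge> norm (\<Prod>m<M. kfac a lam n m)"
      using kfac_ge1[of n M] step assms by (simp add: mult_le_cancel_left1)
    finally show ?case using step by linarith
  qed simp
  have "norm (\<Prod>m<N. kfac a lam n m) \<le> norm (P n)"
    by (rule LIMSEQ_le_const[OF tendsto_norm[OF kfac_lim]]) (use mono in blast)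
  then show ?thesis unfolding CC_eq c_def norm_mult by (simp add: mult_left_mono)
qed

lemma partial_fr: "\<forall>m. \<mu> \<noteq> \<alpha> m \<Longrightarrow> RR \<alpha> lam {..<N} \<mu> = 1 + (\<Sum>n<N. CC \<alpha> lam {..<N} n / (\<mu> - \<alpha> n))"
  by (rule partial_fractions) (auto simp: inj_on_def alpha_inj)

lemma RN_lim:
  assumes mu0: "\<mu> \<noteq> 0" and mua: "\<forall>n. \<mu> \<noteq> \<alpha> n"
  shows "(\<lambda>N. RR \<alpha> lam {..<N} \<mu>) \<longlonglongrightarrow> G \<mu>"
proof -
  have dl: "(\<lambda>n. 1 / (\<mu> - \<alpha> n)) \<longlonglongrightarrow> 1 / (\<mu> - 0)"
    using alpha0 mu0 by (intro tendsto_intros) auto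
  then obtain B where B: "B > 0" "\<And>n. norm (1 / (\<mu> - \<alpha> n)) \<le> B"
    by (metis Bseq_def convergent_imp_Bseq convergentI)
  define f where "f n N = (if n < N then CC \<alpha> lam {..<N} n / (\<mu> - \<alpha> n) else 0)" for n N
  have lim: "(\<lambda>N. f n N) \<longlonglongrightarrow> c n / (\<mu> - \<alpha> n)" for n
  proof -
    have "\<forall>\<^sub>F N in sequentially. CC \<alpha> lam {..<N} n / (\<mu> - \<alpha> n) = f n N"
      unfolding f_def eventually_sequentially by (intro exI[of _ "Suc n"]) auto
    moreover have "(\<lambda>N. CC \<alpha> lam {..<N} n / (\<mu> - \<alpha> n)) \<longlonglongrightarrow> c n / (\<mu> - \<alpha> n)"
      by (intro tendsto_divide CC_lim tendsto_const) (use mua in auto)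
    ultimately show ?thesis using Lim_transform_eventually by blast
  qed
  have bnd: "norm (f n N) \<le> norm (c n) * B" for n N
  proof (cases "n < N")
    case True
    have "norm (f n N) = norm (CC \<alpha> lam {..<N} n) * norm (1 / (\<mu> - \<alpha> n))"
      using True by (simp add: f_def norm_divide)
    also have "\<dots> \<le> norm (c n) * B"
      using CC_bound[OF True] B by (intro mult_mono) auto
    finally show ?thesis .
  qed (use B in \<open>simp add: f_def\<close>)
  have T: "(\<lambda>N. suminf (\<lambda>n. f n N)) \<longlonglongrightarrow> (\<Sum>n. c n / (\<mu> - \<alpha> n))"
    using tannerys_theorem[of "\<lambda>n N. f n N" "\<lambda>n. c n / (\<mu> - \<alpha> n)" sequentially "\<lambda>n. norm (c n) * B"]
      lim bnd summable_mult2[OF summable_c, of B] by (simp add: always_eventually)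
  have "suminf (\<lambda>n. f n N) = (\<Sum>n<N. CC \<alpha> lam {..<N} n / (\<mu> - \<alpha> n))" for N
    by (subst suminf_finite[of "{..<N}"]) (auto simp: f_def)
  hence "(\<lambda>N. RR \<alpha> lam {..<N} \<mu>) = (\<lambda>N. 1 + suminf (\<lambda>n. f n N))"
    using partial_fr mua by auto
  then show ?thesis unfolding G_def by (simp add: tendsto_add[OF tendsto_const T])
qed

end

context setting begin

definition "u m = (\<alpha> m - lam m) / (\<alpha> 0 - \<alpha> m)"

lemma a_lt0: "0 < m \<Longrightarrow> a m < a 0" using adec by blast

lemma norm_a0: "0 < m \<Longrightarrow> norm (\<alpha> 0 - \<alpha> m) = a 0 - a m"
proof -
  assume m: "0 < m"
  have "norm (\<alpha> 0 - \<alpha> m) = norm (complex_of_real (a 0 - a m))" by simp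
  also have "\<dots> = a 0 - a m" using a_lt0[OF m] by (simp only: norm_of_real)
  finally show ?thesis .
qed

lemma kfac0_eq: "0 < m \<Longrightarrow> kfac a lam 0 m = 1 + u m"
proof -
  assume m: "0 < m"
  have "\<alpha> 0 - \<alpha> m \<noteq> 0" using a_lt0[OF m] by simp
  then show ?thesis using m kfac_eq[of m 0] by (simp add: u_def field_simps)
qed

lemma Re_u: "0 < m \<Longrightarrow> 0 \<le> Re (u m)"
proof -
  assume m: "0 < m"
  have "Re (u m) = (a m - Re (lam m)) / (a 0 - a m)"
    unfolding u_def by (metis Re_divide_of_real minus_complex.simps(1) of_real_diff Re_complex_of_real)
  then show ?thesis using a_lt0[OF m] apos[of m] relam[of m] by simp
qed

lemma u_lim: "u \<longlonglongrightarrow> 0"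
proof -
  have "u \<longlonglongrightarrow> (0 - 0) / (\<alpha> 0 - 0)"
    unfolding u_def using apos[of 0] by (intro tendsto_intros alpha0 lam0) auto
  then show ?thesis by simp
qed

lemma summable_Ln0: "summable (\<lambda>m. Ln (kfac a lam 0 m))"
  by (rule summable_Ln_complex[OF cp kfac_nz])

lemma ev_small: "r > 0 \<Longrightarrow> eventually (\<lambda>m. norm (u m) \<le> r) sequentially"
  using u_lim by (metis (mono_tags, lifting) eventually_mono less_imp_le order_tendstoD(2) tendsto_norm_zero_iff)

lemma ev_half: "eventually (\<lambda>m. norm (u m) \<le> 1/2) sequentially"
  by (rule ev_small) simp

lemma ev_pos: "eventually (\<lambda>m. 0 < m) sequentially"
  by (simp add: eventually_gt_at_top)

lemma summable_u2: "summable (\<lambda>m. norm (u m)^2)"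
proof -
  have s1: "summable (\<lambda>m. Re (Ln (kfac a lam 0 m)))" by (rule summable_Re[OF summable_Ln0])
  have "eventually (\<lambda>m. norm (norm (u m)^2) \<le> 4 * Re (Ln (kfac a lam 0 m))) sequentially"
    using ev_half ev_pos
  proof eventually_elim
    case (elim m)
    define t where "t = norm (u m)^2"
    have "norm (u m)^2 \<le> (1/2)^2" by (rule power_mono) (use elim in auto)
    hence t: "0 \<le> t" "t \<le> 1/4" unfolding t_def by (auto simp: power2_eq_square)
    have "norm (1 + u m)^2 = (1 + Re (u m))^2 + (Im (u m))^2"
      by (simp add: cmod_power2)
    also have "\<dots> \<ge> 1 + t" unfolding t_def cmod_power2 using Re_u[OF elim(2)]
      by (simp add: power2_eq_square algebra_simps)
    finally have h: "1 + t \<le> norm (1 + u m)^2" .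
    have "t - t^2 \<le> ln (1 + t)" by (rule ln_one_plus_pos_lower_bound) (use t in auto)
    also have "ln (1 + t) \<le> ln (norm (1 + u m)^2)" using h t by (intro ln_mono) auto
    also have "\<dots> = 2 * ln (norm (1 + u m))"
    proof -
      have "norm (1 + u m) \<noteq> 0" using h t by (intro notI) simp
      then show ?thesis by (simp add: ln_realpow)
    qed
    finally have "t - t^2 \<le> 2 * ln (norm (1 + u m))" .
    moreover have "t/2 \<le> t - t^2" using t by (simp add: power2_eq_square) (simp add: algebra_simps mult_left_le)
    moreover have "1 + u m \<noteq> 0" using kfac_nz[of 0 m] kfac0_eq[OF elim(2)] by simp
    ultimately show ?case using kfac0_eq[OF elim(2)] Re_Ln unfolding t_def by simp
  qed
  then show ?thesis by (rule summable_comparison_test_ev) (intro summable_mult s1)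
qed

lemma Ln_lin: assumes "norm z \<le> 1/2" shows "norm (Ln (1 + z) - z) \<le> 2 * norm z^2"
proof -
  have "norm (Ln (1 + z) - z) \<le> norm z^2 / (1 - norm z)" by (rule Ln_approx_linear) (use assms in auto)
  also have "\<dots> \<le> norm z^2 / (1/2)" using assms by (intro divide_left_mono) auto
  finally show ?thesis by simp
qed

lemma summable_u: "summable u"
proof -
  have s1: "summable (\<lambda>m. Ln (1 + u m))"
    using summable_Ln0 by (subst summable_cong[OF eventually_mono[OF ev_pos]]) (auto simp: kfac0_eq)
  have s2: "summable (\<lambda>m. Ln (1 + u m) - u m)"
    by (rule summable_comparison_test_ev[OF eventually_mono[OF ev_half] summable_mult[OF summable_u2, of 2]])
       (auto intro: Ln_lin)
  have "summable (\<lambda>m. Ln (1 + u m) - (Ln (1 + u m) - u m))" by (rule summable_diff[OF s1 s2])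
  then show ?thesis by simp
qed

lemma G_nz:
  assumes mu0: "\<mu> \<noteq> 0" and mua: "\<forall>n. \<mu> \<noteq> \<alpha> n" and mul: "\<forall>n. \<mu> \<noteq> lam n"
  shows "G \<mu> \<noteq> 0"
proof -
  define w where "w m = (\<alpha> m - lam m) / (\<mu> - \<alpha> m)" for m
  define \<kappa> where "\<kappa> = \<alpha> 0 / \<mu>"
  define \<epsilon> where "\<epsilon> m = \<alpha> m * (\<alpha> 0 - \<mu>) / (\<mu> * (\<mu> - \<alpha> m))" for m
  have nz: "\<mu> - \<alpha> m \<noteq> 0" for m using mua by auto
  have wid: "w m = \<kappa> * u m + u m * \<epsilon> m" if m: "0 < m" for m
  proof -
    have ne: "\<alpha> 0 - \<alpha> m \<noteq> 0" using a_lt0[OF m] by simp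
    have e1: "\<kappa> + \<epsilon> m = (\<alpha> 0 - \<alpha> m) / (\<mu> - \<alpha> m)"
      unfolding \<kappa>_def \<epsilon>_def using nz[of m] mu0 by (simp add: divide_simps) (simp add: algebra_simps)
    have e2: "w m = u m * (\<kappa> + \<epsilon> m)" unfolding e1 u_def w_def using ne by simp
    show ?thesis unfolding e2 by (simp add: algebra_simps)
  qed
  have far: "eventually (\<lambda>m. norm \<mu> / 2 \<le> norm (\<mu> - \<alpha> m)) sequentially"
  proof -
    have "eventually (\<lambda>m. norm (\<alpha> m) < norm \<mu> / 2) sequentially"
      using alpha0 mu0 by (metis (mono_tags) divide_pos_pos order_tendstoD(2) tendsto_norm_zero_iff zero_less_norm_iff zero_less_numeral)
    then show ?thesis
    proof eventually_elim
      case (elim m)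
      have "norm \<mu> \<le> norm (\<mu> - \<alpha> m) + norm (\<alpha> m)"
        using norm_triangle_ineq[of "\<mu> - \<alpha> m" "\<alpha> m"] by simp
      then show ?case using elim by linarith
    qed
  qed
  have am_le: "a m \<le> norm (u m) * a 0" if m: "0 < m" for m
  proof -
    have "a m \<le> norm (\<alpha> m - lam m)" by (rule norm_diff_ge)
    also have "norm (\<alpha> m - lam m) = norm (u m) * (a 0 - a m)"
      using a_lt0[OF m] norm_a0[OF m] unfolding u_def by (simp add: norm_divide)
    also have "\<dots> \<le> norm (u m) * a 0" using apos[of m] by (intro mult_left_mono) auto
    finally show ?thesis .
  qed
  define C1 where "C1 = a 0 * norm (\<alpha> 0 - \<mu>) * 2 / norm \<mu> ^ 2"
  have eps_bd: "eventually (\<lambda>m. norm (u m * \<epsilon> m) \<le> C1 * norm (u m)^2) sequentially"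
    using far ev_pos
  proof eventually_elim
    case (elim m)
    have "norm (\<epsilon> m) = a m * norm (\<alpha> 0 - \<mu>) / (norm \<mu> * norm (\<mu> - \<alpha> m))"
      unfolding \<epsilon>_def using apos[of m] by (simp add: norm_divide norm_mult)
    also have "\<dots> \<le> (norm (u m) * a 0) * norm (\<alpha> 0 - \<mu>) / (norm \<mu> * (norm \<mu> / 2))"
      using elim am_le[OF elim(2)] mu0 apos[of m]
      by (intro frac_le mult_right_mono mult_left_mono mult_pos_pos) auto
    also have "\<dots> = C1 * norm (u m)" unfolding C1_def using mu0 by (simp add: power2_eq_square field_simps)
    finally have "norm (\<epsilon> m) \<le> C1 * norm (u m)" .
    then have "norm (u m) * norm (\<epsilon> m) \<le> norm (u m) * (C1 * norm (u m))" by (intro mult_left_mono) auto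
    then show ?case by (simp add: norm_mult power2_eq_square mult_ac)
  qed
  have sw: "summable w"
  proof -
    have "summable (\<lambda>m. \<kappa> * u m + u m * \<epsilon> m)"
      by (intro summable_add summable_mult summable_u
          summable_comparison_test_ev[OF eps_bd summable_mult[OF summable_u2]])
    then show ?thesis by (subst summable_cong[OF eventually_mono[OF ev_pos]]) (auto simp: wid)
  qed
  define C2 where "C2 = 2 * a 0 / norm \<mu>"
  have w_bd: "eventually (\<lambda>m. norm (w m) \<le> C2 * norm (u m)) sequentially"
    using far ev_pos
  proof eventually_elim
    case (elim m)
    have "norm (w m) = norm (u m) * (a 0 - a m) / norm (\<mu> - \<alpha> m)"
      using a_lt0[OF elim(2)] norm_a0[OF elim(2)] unfolding w_def u_def by (simp add: norm_divide)
    also have "\<dots> \<le> norm (u m) * a 0 / (norm \<mu> / 2)"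
      using elim apos[of m] mu0 a_lt0[OF elim(2)] by (intro frac_le mult_left_mono) auto
    also have "\<dots> = C2 * norm (u m)" unfolding C2_def by simp
    finally show ?case .
  qed
  have sw2: "summable (\<lambda>m. norm (w m)^2)"
  proof (rule summable_comparison_test_ev[OF _ summable_mult[OF summable_u2, of "C2^2"]])
    show "eventually (\<lambda>m. norm (norm (w m)^2) \<le> C2^2 * norm (u m)^2) sequentially"
      using w_bd
    proof eventually_elim
      case (elim m)
      have "norm (w m)^2 \<le> (C2 * norm (u m))^2" by (rule power_mono[OF elim]) simp
      then show ?case by (simp add: power_mult_distrib)
    qed
  qed
  have wlim: "w \<longlonglongrightarrow> 0"
  proof -
    have "w \<longlonglongrightarrow> (0 - 0) / (\<mu> - 0)" unfolding w_def using mu0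
      by (intro tendsto_intros alpha0 lam0) auto
    then show ?thesis by simp
  qed
  have w_small: "eventually (\<lambda>m. norm (w m) \<le> 1/2) sequentially"
    using wlim by (metis (mono_tags, lifting) eventually_mono less_imp_le order_tendstoD(2) tendsto_norm_zero_iff zero_less_divide_1_iff zero_less_numeral)
  have sL: "summable (\<lambda>m. Ln (1 + w m))"
  proof -
    have s2: "summable (\<lambda>m. Ln (1 + w m) - w m)"
      by (rule summable_comparison_test_ev[OF eventually_mono[OF w_small] summable_mult[OF sw2, of 2]])
         (auto intro: Ln_lin)
    have "summable (\<lambda>m. w m + (Ln (1 + w m) - w m))" by (rule summable_add[OF sw s2])
    then show ?thesis by simp
  qed
  define g where "g m = (\<mu> - lam m) / (\<mu> - \<alpha> m)" for m
  have gw: "g m = 1 + w m" for m using nz[of m] unfolding g_def w_def by (simp add: field_simps)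
  have gnz: "g m \<noteq> 0" for m using nz[of m] mul unfolding g_def by auto
  have gw': "g = (\<lambda>m. 1 + w m)" using gw by auto
  have cg: "convergent_prod g"
    using convergent_prod_iff_summable_complex[of g] gnz sL by (simp add: gw')
  have pg: "prodinf g \<noteq> 0" by (rule prodinf_nonzero[OF cg gnz])
  have lim1: "(\<lambda>N. RR \<alpha> lam {..<N} \<mu>) \<longlonglongrightarrow> prodinf g"
    using convergent_prod_LIMSEQ[OF cg] LIMSEQ_lessThan_iff_atMost[of "\<lambda>S. \<Prod>m\<in>S. g m"]
    by (simp add: RR_def g_def)
  have "G \<mu> = prodinf g" by (rule LIMSEQ_unique[OF RN_lim[OF mu0 mua] lim1])
  then show ?thesis using pg by simp
qed

lemma G_lam: assumes "lam j \<noteq> 0" shows "G (lam j) = 0"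
proof -
  have "eventually (\<lambda>N. RR \<alpha> lam {..<N} (lam j) = 0) sequentially"
    unfolding eventually_sequentially RR_def
    by (intro exI[of _ "Suc j"] allI impI prod_zero) (auto intro!: bexI[of _ j])
  hence "(\<lambda>N. RR \<alpha> lam {..<N} (lam j)) \<longlonglongrightarrow> 0"
    by (rule tendsto_eventually)
  moreover have "(\<lambda>N. RR \<alpha> lam {..<N} (lam j)) \<longlonglongrightarrow> G (lam j)"
    by (rule RN_lim) (use assms lam_ne_a in auto)
  ultimately show ?thesis using LIMSEQ_unique by blast
qed

end

lemma bounded_op_construct:
  assumes X: "valid_space X" and d: "convergent d" and w1: "inX X w1" and w2: "inX X w2"
    and a1: "\<And>x y. inX X x \<Longrightarrow> inX X y \<Longrightarrow> \<phi>1 (\<lambda>n. x n + y n) = \<phi>1 x + \<phi>1 y"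
    and s1: "\<And>c x. inX X x \<Longrightarrow> \<phi>1 (\<lambda>n. c * x n) = c * \<phi>1 x"
    and b1: "\<And>x. inX X x \<Longrightarrow> norm (\<phi>1 x) \<le> K1 * normX X x"
    and a2: "\<And>x y. inX X x \<Longrightarrow> inX X y \<Longrightarrow> \<phi>2 (\<lambda>n. x n + y n) = \<phi>2 x + \<phi>2 y"
    and s2: "\<And>c x. inX X x \<Longrightarrow> \<phi>2 (\<lambda>n. c * x n) = c * \<phi>2 x"
    and b2: "\<And>x. inX X x \<Longrightarrow> norm (\<phi>2 x) \<le> K2 * normX X x"
  shows "bounded_opX X (\<lambda>y n. d n * y n + \<phi>1 y * w1 n + \<phi>2 y * w2 n)"
proof -
  obtain B where B: "\<And>n. norm (d n) \<le> B" using d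
    by (metis Bseq_def convergent_imp_Bseq less_eq_real_def)
  have B0: "0 \<le> B" using B[of 0] norm_ge_zero order_trans by blast
  define S where "S = (\<lambda>y n. d n * y n + \<phi>1 y * w1 n + \<phi>2 y * w2 n)"
  have inS: "inX X (S y)" if "inX X y" for y
    unfolding S_def by (intro inX_add inX_mult inX_scale that d w1 w2 X)
  have W: "0 \<le> normX X w1" "0 \<le> normX X w2" using normX_nonneg w1 w2 X by auto
  have bnd: "normX X (S y) \<le> (9 * (B + max K1 0 * normX X w1 + max K2 0 * normX X w2)) * normX X y"
    if y: "inX X y" for y
  proof -
    have Y: "0 \<le> normX X y" using normX_nonneg y X by auto
    have "normX X (S y) \<le> 9 * (B * normX X y + norm (\<phi>1 y) * normX X w1 + norm (\<phi>2 y) * normX X w2)"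
    proof (rule normX_cmp[OF X y w1 w2 inS[OF y] B0 norm_ge_zero norm_ge_zero])
      fix n
      have "norm (S y n) \<le> norm (d n * y n) + norm (\<phi>1 y * w1 n) + norm (\<phi>2 y * w2 n)"
        unfolding S_def using norm_triangle_ineq[of "d n * y n + \<phi>1 y * w1 n" "\<phi>2 y * w2 n"]
          norm_triangle_ineq[of "d n * y n" "\<phi>1 y * w1 n"] by linarith
      also have "norm (d n * y n) \<le> B * norm (y n)" unfolding norm_mult
        using B by (intro mult_right_mono) auto
      finally show "norm (S y n) \<le> B * norm (y n) + norm (\<phi>1 y) * norm (w1 n) + norm (\<phi>2 y) * norm (w2 n)"
        by (simp add: norm_mult)
    qed
    also have "norm (\<phi>1 y) * normX X w1 \<le> (max K1 0 * normX X y) * normX X w1"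
      using b1[OF y] Y W by (intro mult_right_mono) (auto intro: order_trans[OF _ mult_right_mono[of K1 "max K1 0"]])
    also have "norm (\<phi>2 y) * normX X w2 \<le> (max K2 0 * normX X y) * normX X w2"
      using b2[OF y] Y W by (intro mult_right_mono) (auto intro: order_trans[OF _ mult_right_mono[of K2 "max K2 0"]])
    finally show ?thesis by (simp add: algebra_simps)
  qed
  show ?thesis unfolding S_def[symmetric] bounded_opX_def
  proof (intro conjI allI impI)
    show "inX X (S x)" if "inX X x" for x using inS that by blast
    show "S (\<lambda>n. x n + y n) = (\<lambda>n. S x n + S y n)" if "inX X x" "inX X y" for x y
      unfolding S_def using a1[OF that] a2[OF that] by (auto simp: algebra_simps)
    show "S (\<lambda>n. c * x n) = (\<lambda>n. c * S x n)" if "inX X x" for c x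
      unfolding S_def using s1[OF that] s2[OF that] by (auto simp: algebra_simps)
    show "\<exists>K. \<forall>x. inX X x \<longrightarrow> normX X (S x) \<le> K * normX X x" using bnd by blast
  qed
qed

context setting begin

definition "kf x = (\<Sum>n. k n * x n)"

lemma kf_lin: "inX X x \<Longrightarrow> inX X y \<Longrightarrow> kf (\<lambda>n. p * x n + q * y n) = p * kf x + q * kf y"
proof -
  assume x: "inX X x" and y: "inX X y"
  have "kf (\<lambda>n. p * x n + q * y n) = (\<Sum>n. p * (k n * x n) + q * (k n * y n))"
    unfolding kf_def by (simp add: algebra_simps)
  also have "\<dots> = p * kf x + q * kf y" unfolding kf_def
    using sums_add[OF sums_mult[OF summable_sums[OF dual_summable[OF x]], of p]
        sums_mult[OF summable_sums[OF dual_summable[OF y]], of q]]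
    by (simp add: sums_iff)
  finally show ?thesis .
qed

lemma kf_add: "inX X x \<Longrightarrow> inX X y \<Longrightarrow> kf (\<lambda>n. x n + y n) = kf x + kf y"
  using kf_lin[of x y 1 1] by simp

lemma kf_scale: "inX X x \<Longrightarrow> kf (\<lambda>n. p * x n) = p * kf x"
  using kf_lin[of x x p 0] by simp

lemma kf_bound: obtains K where "\<And>x. inX X x \<Longrightarrow> norm (kf x) \<le> K * normX X x"
  using dual_bound unfolding kf_def by metis

lemma Top_eq: "Top a b k x = (\<lambda>n. \<alpha> n * x n + kf x * b n)"
  by (simp add: Top_def kf_def)

lemma kf_ee: "kf (ee j) = k j"
  unfolding kf_def by (subst suminf_finite[of "{j}"]) (auto simp: ee_def)

lemma zero_spec: "0 \<in> spectrumX X (Top a b k)"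
proof (rule ccontr)
  assume "0 \<notin> spectrumX X (Top a b k)"
  then obtain S where Sb: "bounded_opX X S"
    and inv: "\<And>x. inX X x \<Longrightarrow> S (\<lambda>n. Top a b k x n - 0 * x n) = x"
    unfolding spectrumX_def by blast
  obtain K0 where K0: "\<And>x. inX X x \<Longrightarrow> normX X (S x) \<le> K0 * normX X x"
    using Sb unfolding bounded_opX_def by blast
  define K where "K = max K0 0"
  have K: "0 \<le> K" "\<And>x. inX X x \<Longrightarrow> normX X (S x) \<le> K * normX X x"
  proof -
    show "0 \<le> K" by (simp add: K_def)
    fix x assume x: "inX X x"
    have "K0 * normX X x \<le> K * normX X x" unfolding K_def
      using normX_nonneg[OF x X] by (intro mult_right_mono) auto
    then show "normX X (S x) \<le> K * normX X x" using K0[OF x] by linarith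
  qed
  have Sadd: "S (\<lambda>n. x n + y n) = (\<lambda>n. S x n + S y n)" if "inX X x" "inX X y" for x y
    using Sb that unfolding bounded_opX_def by blast
  have Ssc: "S (\<lambda>n. c * x n) = (\<lambda>n. c * S x n)" if "inX X x" for c x
    using Sb that unfolding bounded_opX_def by blast
  have SX: "inX X (S x)" if "inX X x" for x using Sb that unfolding bounded_opX_def by blast
  define z where "z = S b"
  have zX: "inX X z" unfolding z_def by (rule SX[OF bX])
  have key: "norm (ee N m - k N * z m) \<le> a N * K" for N m
  proof -
    have eX: "inX X (ee N)" by (rule inX_ee[OF X])
    have "(\<lambda>n. Top a b k (ee N) n - 0 * ee N n) = (\<lambda>n. \<alpha> N * ee N n + k N * b n)"
      unfolding Top_eq kf_ee by (auto simp: ee_def)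
    hence "ee N = S (\<lambda>n. \<alpha> N * ee N n + k N * b n)" using inv[OF eX] by simp
    also have "\<dots> = (\<lambda>n. \<alpha> N * S (ee N) n + k N * z n)"
      unfolding z_def using eX bX X by (simp add: Sadd inX_scale Ssc)
    finally have "ee N m - k N * z m = \<alpha> N * S (ee N) m" by (metis add_diff_cancel_right')
    hence "norm (ee N m - k N * z m) = a N * norm (S (ee N) m)"
      using apos[of N] by (simp add: norm_mult)
    also have "\<dots> \<le> a N * (K * normX X (ee N))"
      using apos[of N] coord_le[OF SX[OF eX] X, of m] K(2)[OF eX]
      by (intro mult_left_mono) auto
    also have "\<dots> \<le> a N * K" using mult_left_le[OF normX_ee[OF X, of N] K(1)] apos[of N]
      by (intro mult_left_mono) auto
    finally show ?thesis .
  qed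
  obtain m0 C where C: "\<And>N. N \<noteq> m0 \<Longrightarrow> 1 \<le> a N * C"
  proof (cases "\<exists>m. z m \<noteq> 0")
    case True
    then obtain m0 where m0: "z m0 \<noteq> 0" by auto
    define Z where "Z = normX X z"
    have "1 \<le> a N * (K + K * Z / norm (z m0))" if "N \<noteq> m0" for N
    proof -
      have "norm (k N) * norm (z m0) \<le> a N * K" using key[of N m0] that by (simp add: ee_def norm_mult)
      hence kN: "norm (k N) \<le> a N * K / norm (z m0)" using m0 by (simp add: field_simps)
      have zN: "norm (z N) \<le> Z" unfolding Z_def by (rule coord_le[OF zX X])
      have "1 \<le> norm (ee N N - k N * z N) + norm (k N * z N)"
        using norm_triangle_ineq[of "ee N N - k N * z N" "k N * z N"] by (simp add: ee_def)
      also have "norm (k N * z N) \<le> (a N * K / norm (z m0)) * Z"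
        unfolding norm_mult using kN zN K(1) apos[of N] by (intro mult_mono) auto
      finally have "1 \<le> a N * K + (a N * K / norm (z m0)) * Z" using key[of N N] by linarith
      then show ?thesis by (simp add: algebra_simps)
    qed
    then show ?thesis using that by blast
  next
    case False
    have "1 \<le> a N * K" for N using key[of N N] False by (simp add: ee_def)
    then show ?thesis using that by blast
  qed
  have "(\<lambda>N. a N * C) \<longlonglongrightarrow> 0 * C" by (intro tendsto_mult a0 tendsto_const)
  hence "eventually (\<lambda>N. a N * C < 1) sequentially" by (simp add: order_tendstoD(2))
  then obtain N0 where N0: "\<And>N. N \<ge> N0 \<Longrightarrow> a N * C < 1" unfolding eventually_sequentially by blast
  have "a (max N0 (Suc m0)) * C < 1" by (rule N0) simp
  moreover have "1 \<le> a (max N0 (Suc m0)) * C" by (rule C) simp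
  ultimately show False by simp
qed

lemma lam_spec: assumes lj: "lam j \<noteq> 0" shows "lam j \<in> spectrumX X (Top a b k)"
proof (rule ccontr)
  assume "lam j \<notin> spectrumX X (Top a b k)"
  then obtain S where Sb: "bounded_opX X S"
    and inv: "\<And>x. inX X x \<Longrightarrow> S (\<lambda>n. Top a b k x n - lam j * x n) = x"
    unfolding spectrumX_def by blast
  define d where "d n = 1 / (\<alpha> n - lam j)" for n
  define x where "x n = d n * b n" for n
  have dc: "d \<longlonglongrightarrow> 1 / (0 - lam j)" unfolding d_def using lj by (intro tendsto_intros alpha0) auto
  have xX: "inX X x" unfolding x_def by (rule inX_mult[OF bX _ X]) (use dc in \<open>auto simp: convergent_def\<close>)
  have ne: "\<alpha> n - lam j \<noteq> 0" for n using lam_ne_a[of j n] by auto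
  have "kf x = (\<Sum>n. c n / (lam j - \<alpha> n))"
    unfolding kf_def x_def d_def
  proof (rule arg_cong[where f=suminf], rule ext)
    fix n
    have "lam j - \<alpha> n = - (\<alpha> n - lam j)" by simp
    then show "k n * (1 / (\<alpha> n - lam j) * b n) = c n / (lam j - \<alpha> n)"
      using ne[of n] by (simp add: c_eq divide_simps) (simp add: algebra_simps)
  qed
  also have "\<dots> = G (lam j) - 1" by (simp add: G_def)
  finally have kx: "kf x = -1" using G_lam[OF lj] by simp
  have "(\<lambda>n. Top a b k x n - lam j * x n) = (\<lambda>n. 0 * x n)"
    unfolding Top_eq kx using ne by (auto simp: x_def d_def field_simps)
  hence "S (\<lambda>n. 0 * x n) = x" using inv[OF xX] by simp
  moreover have "S (\<lambda>n. 0 * x n) = (\<lambda>n. 0 * S x n)" using Sb xX unfolding bounded_opX_def by blast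
  ultimately have "x 0 = 0" by (metis mult_zero_left)
  then show False using bnz[of 0] ne[of 0] by (simp add: x_def d_def)
qed

end

context setting begin

lemma kf_d_bound:
  assumes d: "convergent d"
  obtains K where "\<And>y. inX X y \<Longrightarrow> norm (kf (\<lambda>n. d n * y n)) \<le> K * normX X y"
proof -
  obtain B where B: "\<And>n. norm (d n) \<le> B" using d
    by (metis Bseq_def convergent_imp_Bseq less_eq_real_def)
  have B0: "0 \<le> B" using B[of 0] norm_ge_zero order_trans by blast
  obtain K0 where K00: "K0 \<ge> 0" and K0: "\<And>x. inX X x \<Longrightarrow> norm (kf x) \<le> K0 * normX X x"
    using dual_bound unfolding kf_def by metis
  have "norm (kf (\<lambda>n. d n * y n)) \<le> (K0 * (9 * B)) * normX X y" if y: "inX X y" for y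
  proof -
    have dy: "inX X (\<lambda>n. d n * y n)" by (rule inX_mult[OF y d X])
    have "normX X (\<lambda>n. d n * y n) \<le> 9 * (B * normX X y + 0 * normX X y + 0 * normX X y)"
      by (rule normX_cmp[OF X y y y dy B0]) (auto simp: norm_mult intro: mult_right_mono B)
    hence "K0 * normX X (\<lambda>n. d n * y n) \<le> K0 * (9 * (B * normX X y))" using K00
      by (intro mult_left_mono) auto
    then show ?thesis using K0[OF dy] by (simp add: mult_ac)
  qed
  then show ?thesis using that by blast
qed

lemma Sinv_props:
  assumes d: "convergent d"
  shows "\<And>x y. inX X x \<Longrightarrow> inX X y \<Longrightarrow> kf (\<lambda>n. d n * (x n + y n)) = kf (\<lambda>n. d n * x n) + kf (\<lambda>n. d n * y n)"
    and "\<And>c x. inX X x \<Longrightarrow> kf (\<lambda>n. d n * (c * x n)) = c * kf (\<lambda>n. d n * x n)"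
proof -
  fix x y assume x: "inX X x" and y: "inX X y"
  have "kf (\<lambda>n. d n * (x n + y n)) = kf (\<lambda>n. d n * x n + d n * y n)" by (simp add: algebra_simps)
  also have "\<dots> = kf (\<lambda>n. d n * x n) + kf (\<lambda>n. d n * y n)"
    by (rule kf_add; rule inX_mult[OF _ d X]) (use x y in auto)
  finally show "kf (\<lambda>n. d n * (x n + y n)) = kf (\<lambda>n. d n * x n) + kf (\<lambda>n. d n * y n)" .
next
  fix c x assume x: "inX X x"
  have "kf (\<lambda>n. d n * (c * x n)) = kf (\<lambda>n. c * (d n * x n))" by (simp add: algebra_simps)
  also have "\<dots> = c * kf (\<lambda>n. d n * x n)" by (rule kf_scale, rule inX_mult[OF x d X])
  finally show "kf (\<lambda>n. d n * (c * x n)) = c * kf (\<lambda>n. d n * x n)" .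
qed

lemma res_generic:
  assumes mu0: "\<mu> \<noteq> 0" and mua: "\<forall>n. \<mu> \<noteq> \<alpha> n" and Gnz: "G \<mu> \<noteq> 0"
  shows "\<mu> \<notin> spectrumX X (Top a b k)"
proof -
  define d where "d n = 1 / (\<alpha> n - \<mu>)" for n
  have ne: "\<alpha> n - \<mu> \<noteq> 0" for n using mua by auto
  have "d \<longlonglongrightarrow> 1 / (0 - \<mu>)" unfolding d_def using mu0 by (intro tendsto_intros alpha0) auto
  hence dc: "convergent d" by (rule convergentI)
  define db where "db n = d n * b n" for n
  have dbX: "inX X db" unfolding db_def by (rule inX_mult[OF bX dc X])
  have Gk: "G \<mu> = 1 + kf db"
  proof -
    have "(\<lambda>n. k n * db n) = (\<lambda>n. c n / (\<mu> - \<alpha> n))"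
    proof
      fix n
      have "\<mu> - \<alpha> n = - (\<alpha> n - \<mu>)" by simp
      then show "k n * db n = c n / (\<mu> - \<alpha> n)" using ne[of n]
        by (simp add: db_def d_def c_eq divide_simps) (simp add: algebra_simps)
    qed
    then show ?thesis by (simp add: G_def kf_def)
  qed
  define \<phi> where "\<phi> y = - kf (\<lambda>n. d n * y n) / G \<mu>" for y
  define S where "S = (\<lambda>y n. d n * y n + \<phi> y * db n + (\<lambda>_. 0) y * b n)"
  obtain K where K: "\<And>y. inX X y \<Longrightarrow> norm (kf (\<lambda>n. d n * y n)) \<le> K * normX X y"
    using kf_d_bound[OF dc] by blast
  have Sb: "bounded_opX X S" unfolding S_def
  proof (rule bounded_op_construct[OF X dc dbX bX, where ?K2.0="0::real"])
    show "\<phi> (\<lambda>n. x n + y n) = \<phi> x + \<phi> y" if "inX X x" "inX X y" for x y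
      unfolding \<phi>_def using Sinv_props(1)[OF dc that] by (simp add: add_divide_distrib diff_divide_distrib)
    show "\<phi> (\<lambda>n. c * x n) = c * \<phi> x" if "inX X x" for c x
      unfolding \<phi>_def using Sinv_props(2)[OF dc that] by simp
    show "norm (\<phi> x) \<le> (K / norm (G \<mu>)) * normX X x" if "inX X x" for x
      unfolding \<phi>_def using K[OF that] Gnz by (simp add: norm_divide divide_right_mono)
  qed auto
  have inv1: "S (\<lambda>n. Top a b k x n - \<mu> * x n) = x" if x: "inX X x" for x
  proof -
    define y where "y = (\<lambda>n. Top a b k x n - \<mu> * x n)"
    have dy: "(\<lambda>n. d n * y n) = (\<lambda>n. 1 * x n + kf x * db n)"
    proof
      fix n show "d n * y n = 1 * x n + kf x * db n"
        unfolding y_def Top_eq d_def db_def using ne[of n] by (simp add: field_simps)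
    qed
    have "kf (\<lambda>n. d n * y n) = kf x * G \<mu>" unfolding dy kf_lin[OF x dbX] Gk by (simp add: algebra_simps)
    hence "\<phi> y = - kf x" unfolding \<phi>_def using Gnz by simp
    then have "S y = x" unfolding S_def using dy by (auto simp: fun_eq_iff)
    then show ?thesis unfolding y_def .
  qed
  have inv2: "(\<lambda>n. Top a b k (S y) n - \<mu> * S y n) = y" if y: "inX X y" for y
  proof -
    have dyX: "inX X (\<lambda>n. d n * y n)" by (rule inX_mult[OF y dc X])
    have Sy: "S y = (\<lambda>n. 1 * (d n * y n) + \<phi> y * db n)" unfolding S_def by simp
    have "kf (S y) = kf (\<lambda>n. d n * y n) + \<phi> y * kf db" unfolding Sy kf_lin[OF dyX dbX] by simp
    also have "\<dots> = - \<phi> y" unfolding \<phi>_def Gk using Gnz unfolding Gk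
      by (simp add: field_simps)
    finally have kS: "kf (S y) = - \<phi> y" .
    show ?thesis
    proof
      fix n
      have "Top a b k (S y) n - \<mu> * S y n = (\<alpha> n - \<mu>) * S y n + kf (S y) * b n"
        by (simp add: Top_eq algebra_simps)
      also have "\<dots> = (\<alpha> n - \<mu>) * (d n * y n + \<phi> y * (d n * b n)) - \<phi> y * b n"
        unfolding kS by (simp add: Sy db_def)
      also have "\<dots> = ((\<alpha> n - \<mu>) * d n) * y n + \<phi> y * ((\<alpha> n - \<mu>) * d n) * b n - \<phi> y * b n"
        by (simp add: algebra_simps)
      also have "(\<alpha> n - \<mu>) * d n = 1" unfolding d_def using ne[of n] by simp
      also have "1 * y n + \<phi> y * 1 * b n - \<phi> y * b n = y n" by simp
      finally show "Top a b k (S y) n - \<mu> * S y n = y n" .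
    qed
  qed
  show ?thesis unfolding spectrumX_def using Sb inv1 inv2 by blast
qed

end

context setting begin

lemma res_aj: "\<alpha> j \<notin> spectrumX X (Top a b k)"
proof -
  define d where "d n = (if n = j then 0 else 1 / (\<alpha> n - \<alpha> j))" for n
  have ne: "n \<noteq> j \<Longrightarrow> \<alpha> n - \<alpha> j \<noteq> 0" for n using alpha_inj by force
  have dc: "convergent d"
  proof -
    have "(\<lambda>n. 1 / (\<alpha> n - \<alpha> j)) \<longlonglongrightarrow> 1 / (0 - \<alpha> j)"
      using apos[of j] by (intro tendsto_intros alpha0) auto
    moreover have "eventually (\<lambda>n. 1 / (\<alpha> n - \<alpha> j) = d n) sequentially"
      unfolding eventually_sequentially d_def by (intro exI[of _ "Suc j"]) auto
    ultimately have "d \<longlonglongrightarrow> 1 / (0 - \<alpha> j)" using Lim_transform_eventually by blast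
    then show ?thesis by (rule convergentI)
  qed
  define db where "db n = d n * b n" for n
  have dbX: "inX X db" unfolding db_def by (rule inX_mult[OF bX dc X])
  have eX: "inX X (ee j)" by (rule inX_ee[OF X])
  define s where "s y = y j / b j" for y :: "nat \<Rightarrow> complex"
  define Kdb where "Kdb = kf db"
  define r where "r y = (s y - kf (\<lambda>n. d n * y n) + s y * Kdb) / k j" for y
  define S where "S = (\<lambda>y n. d n * y n + (\<lambda>y. - s y) y * db n + r y * ee j n)"
  obtain K where K: "\<And>y. inX X y \<Longrightarrow> norm (kf (\<lambda>n. d n * y n)) \<le> K * normX X y"
    using kf_d_bound[OF dc] by blast
  have sb: "norm (s y) \<le> (1 / norm (b j)) * normX X y" if "inX X y" for y
    unfolding s_def using coord_le[OF that X, of j] bnz[of j]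
    by (simp add: norm_divide divide_right_mono)
  have Sb: "bounded_opX X S" unfolding S_def
  proof (rule bounded_op_construct[OF X dc dbX eX])
    show "- s (\<lambda>n. x n + y n) = - s x + - s y" for x y by (simp add: s_def add_divide_distrib)
    show "- s (\<lambda>n. c * x n) = c * - s x" for c x by (simp add: s_def)
    show "norm (- s x) \<le> (1 / norm (b j)) * normX X x" if "inX X x" for x using sb[OF that] by simp
    show "r (\<lambda>n. x n + y n) = r x + r y" if "inX X x" "inX X y" for x y
      unfolding r_def using Sinv_props(1)[OF dc that]
      by (simp add: s_def add_divide_distrib diff_divide_distrib algebra_simps)
    show "r (\<lambda>n. c * x n) = c * r x" if "inX X x" for c x
      unfolding r_def using Sinv_props(2)[OF dc that]
      by (simp add: s_def add_divide_distrib diff_divide_distrib algebra_simps)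
    show "norm (r x) \<le> ((1 / norm (b j) + K + norm Kdb / norm (b j)) / norm (k j)) * normX X x"
      if x: "inX X x" for x
    proof -
      have "norm (s x - kf (\<lambda>n. d n * x n) + s x * Kdb)
          \<le> norm (s x) + norm (kf (\<lambda>n. d n * x n)) + norm (s x) * norm Kdb"
        using norm_triangle_ineq4[of "s x" "kf (\<lambda>n. d n * x n)"]
          norm_triangle_ineq[of "s x - kf (\<lambda>n. d n * x n)" "s x * Kdb"] by (simp add: norm_mult)
      also have "\<dots> \<le> (1 / norm (b j)) * normX X x + K * normX X x + ((1 / norm (b j)) * normX X x) * norm Kdb"
        using sb[OF x] K[OF x] by (intro add_mono mult_right_mono) auto
      also have "\<dots> = (1 / norm (b j) + K + norm Kdb / norm (b j)) * normX X x"
        by (simp add: algebra_simps)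
      finally show ?thesis unfolding r_def using k_nz[of j]
        by (simp add: norm_divide divide_right_mono mult.commute)
    qed
  qed
  have inv1: "S (\<lambda>n. Top a b k x n - \<alpha> j * x n) = x" if x: "inX X x" for x
  proof -
    define y where "y = (\<lambda>n. Top a b k x n - \<alpha> j * x n)"
    define t where "t = kf x"
    have yn: "y n = (\<alpha> n - \<alpha> j) * x n + t * b n" for n
      unfolding y_def t_def Top_eq by (simp add: algebra_simps)
    have sy: "s y = t" unfolding s_def using yn[of j] bnz[of j] by simp
    have dy: "(\<lambda>n. d n * y n) = (\<lambda>n. 1 * (1 * x n + (- x j) * ee j n) + t * db n)"
    proof
      fix n show "d n * y n = 1 * (1 * x n + (- x j) * ee j n) + t * db n"
      proof (cases "n = j")
        case True then show ?thesis by (simp add: d_def db_def ee_def)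
      next
        case False then show ?thesis unfolding yn d_def db_def ee_def using ne[OF False]
          by (simp add: field_simps)
      qed
    qed
    have xe: "inX X (\<lambda>n. 1 * x n + (- x j) * ee j n)" by (intro inX_add inX_scale x eX X)
    have "kf (\<lambda>n. d n * y n) = (kf x - x j * k j) + t * Kdb"
      unfolding dy kf_lin[OF xe dbX] kf_lin[OF x eX] kf_ee Kdb_def by simp
    hence ry: "r y = x j" unfolding r_def sy t_def using k_nz[of j] by (simp add: field_simps)
    have "S y = x"
    proof
      fix n show "S y n = x n"
        unfolding S_def ry sy using fun_cong[OF dy, of n] by (simp add: algebra_simps ee_def)
    qed
    then show ?thesis unfolding y_def .
  qed
  have inv2: "(\<lambda>n. Top a b k (S y) n - \<alpha> j * S y n) = y" if y: "inX X y" for y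
  proof -
    have dyX: "inX X (\<lambda>n. d n * y n)" by (rule inX_mult[OF y dc X])
    have Sy: "S y = (\<lambda>n. 1 * (1 * (d n * y n) + (- s y) * db n) + r y * ee j n)" unfolding S_def by simp
    have i1: "inX X (\<lambda>n. 1 * (d n * y n) + (- s y) * db n)" by (intro inX_add inX_scale dyX dbX X)
    have "kf (S y) = kf (\<lambda>n. d n * y n) - s y * Kdb + r y * k j"
      unfolding Sy kf_lin[OF i1 eX] kf_lin[OF dyX dbX] kf_ee Kdb_def by simp
    also have "\<dots> = s y" unfolding r_def using k_nz[of j] by (simp add: field_simps)
    finally have kS: "kf (S y) = s y" .
    show ?thesis
    proof
      fix n
      have "Top a b k (S y) n - \<alpha> j * S y n = (\<alpha> n - \<alpha> j) * S y n + s y * b n"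
        by (simp add: Top_eq kS algebra_simps)
      also have "\<dots> = y n"
      proof (cases "n = j")
        case True then show ?thesis using bnz[of j] by (simp add: s_def)
      next
        case False
        have "(\<alpha> n - \<alpha> j) * S y n = ((\<alpha> n - \<alpha> j) * d n) * (y n - s y * b n)"
          unfolding Sy db_def using False by (simp add: ee_def algebra_simps)
        also have "(\<alpha> n - \<alpha> j) * d n = 1" unfolding d_def using False ne[OF False] by simp
        finally show ?thesis by simp
      qed
      finally show "Top a b k (S y) n - \<alpha> j * S y n = y n" .
    qed
  qed
  show ?thesis unfolding spectrumX_def using Sb inv1 inv2 by blast
qed

lemma main: "spectrumX X (Top a b k) = insert 0 (range lam)"
proof
  show "insert 0 (range lam) \<subseteq> spectrumX X (Top a b k)"
    using zero_spec lam_spec by (metis image_subset_iff insert_subset)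
  show "spectrumX X (Top a b k) \<subseteq> insert 0 (range lam)"
  proof
    fix \<mu> assume mu: "\<mu> \<in> spectrumX X (Top a b k)"
    show "\<mu> \<in> insert 0 (range lam)"
    proof (rule ccontr)
      assume "\<mu> \<notin> insert 0 (range lam)"
      hence mu0: "\<mu> \<noteq> 0" and mul: "\<forall>n. \<mu> \<noteq> lam n" by auto
      show False
      proof (cases "\<exists>j. \<mu> = \<alpha> j")
        case True
        then obtain j where "\<mu> = \<alpha> j" by blast
        then show False using res_aj mu by blast
      next
        case False
        hence mua: "\<forall>n. \<mu> \<noteq> \<alpha> n" by blast
        show False using res_generic[OF mu0 mua G_nz[OF mu0 mua mul]] mu by blast
      qed
    qed
  qed
qed

end

theorem theorem2:
  fixes X :: seqspace and a :: "nat \<Rightarrow> real" and b lam :: "nat \<Rightarrow> complex"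
  assumes "valid_space X"
    and "\<And>n. a n > 0" and "\<And>m n. m < n \<Longrightarrow> a n < a m" and "a \<longlonglongrightarrow> 0"
    and "inX X b" and "\<And>n. b n \<noteq> 0"
    and "lam \<longlonglongrightarrow> 0" and "\<And>n. Re (lam n) \<le> 0"
    and "\<And>n. convergent_prod (kfac a lam n)"
    and "in_dualX X (kseq a b lam)"
  shows "spectrumX X (Top a b (kseq a b lam)) = insert 0 (range lam)"
proof -
  interpret setting X a b lam
    by (rule setting.intro) (fact assms)+
  show ?thesis using main by (simp add: k_def)
qed

end
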